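(* Let $a>1$ be an integer, and define the sequence $(u_i)_{i\geq 0}$ by $u_0=0$, $u_1=1$, and $u_{i+1}=au_i+u_{i-1}$ for $i=1,2,3,\ldots$. Then no integer $x$ can be written as $x=u_m+au_n$ with $m\in\{0,1,2,\ldots\}$ and $n\in\{1,2,3,\ldots\}$ in two or more different ways (i.e., for two distinct pairs $(m,n)$), except in the case $a=2$ and $x=4=u_0+au_2=u_2+au_1$. *)

theory Defs
  imports Main
begin

fun u :: "int \<Rightarrow> nat \<Rightarrow> int" where
  "u a 0 = 0"
| "u a (Suc 0) = 1"
| "u a (Suc (Suc i)) = a * u a (Suc i) + u a i"

end

theory Submission
  imports Defs
begin

lemma u_aux:
  assumes "a > 1" shows "u a k \<ge> 0 \<and> u a (Suc k) > 0"
proof (induction k)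
  case (Suc k)
  then show ?case using assms by (auto intro!: add_pos_nonneg mult_pos_pos)
qed auto

lemma u_nonneg_pos:
  assumes "a > 1" shows "u a k \<ge> 0 \<and> (k \<ge> 1 \<longrightarrow> u a k > 0)"
  using u_aux[OF assms, of k] u_aux[OF assms, of "k - 1"] by (cases k) auto

lemma u_step_less:
  assumes "a > 1" shows "u a k < u a (Suc k)"
proof (cases k)
  case 0 then show ?thesis by simp
next
  case (Suc j)
  have p: "u a (Suc j) > 0" "u a j \<ge> 0" using u_nonneg_pos[OF assms] by auto
  have c1: "a * u a (Suc j) \<ge> 2 * u a (Suc j)" using p assms by (intro mult_right_mono) auto
  have c2: "u a (Suc (Suc j)) = a * u a (Suc j) + u a j" by simp
  show ?thesis unfolding Suc using c1 c2 p by linarith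
qed

lemma u_less_iff:
  assumes "a > 1" shows "(u a i < u a j) = (i < j)"
proof -
  have "strict_mono (u a)" using u_step_less[OF assms] strict_mono_Suc_iff by blast
  then show ?thesis by (simp add: strict_mono_less)
qed

lemma u_le_iff:
  assumes "a > 1" shows "(u a i \<le> u a j) = (i \<le> j)"
  using u_less_iff[OF assms, of j i] by auto

lemma main_lemma:
  fixes a x :: int and m n m' n' :: nat
  assumes a: "a > 1"
    and n': "n' \<ge> 1" and nn: "n' < n"
    and x1: "x = u a m + a * u a n"
    and x2: "x = u a m' + a * u a n'"
  shows "a = 2 \<and> x = 4"
proof -
  note lt = u_less_iff[OF a] and le = u_le_iff[OF a]
  note nn0 = u_nonneg_pos[OF a]
  define j where "j = n - 2"
  have nj: "n = Suc (Suc j)" using nn n' unfolding j_def by simp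
  have un: "u a n = a * u a (Suc j) + u a j" using nj by simp
  have pn': "u a n' > 0" using nn0 n' by auto
  have apn': "a * u a n' > 0" using pn' a by simp
  have ugt: "u a n > u a n'" using lt nn by simp
  have "a * (u a n - u a n') > 0" using ugt a by simp
  hence "u a m' > u a m" using x1 x2 by (simp add: algebra_simps)
  hence mm: "m < m'" using lt by simp
  have w: "u a (Suc j) > 0" "u a j \<ge> 0" "u a n > 0"
    using nn0[of "Suc j"] nn0[of j] nn0[of n] nn by auto
  have n2: "u a (Suc n) = a * u a n + u a (Suc j)" using nj by simp
  have n3: "u a (Suc (Suc n)) = a * u a (Suc n) + u a n" by simp
  have big: "u a (Suc (Suc n)) > (a+1) * u a n"
  proof -
    have "u a (Suc n) \<ge> a * u a n" using n2 w by simp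
    hence "a * u a (Suc n) \<ge> a * (a * u a n)" using a by (intro mult_left_mono) auto
    moreover have "a * (a * u a n) > a * u a n" using a w(3) by simp
    ultimately show ?thesis using n3 by (simp add: algebra_simps)
  qed
  show ?thesis
  proof (cases "m \<ge> n")
    case True
    then obtain p where mp: "m = Suc p" using nj by (cases m) auto
    have um1: "u a (Suc m) = a * u a m + u a p" using mp by simp
    have "u a m' \<ge> u a (Suc m)" using le mm by simp
    hence ineq: "u a m + a * u a n \<ge> a * u a m + u a p + a * u a n'" using x1 x2 um1 by simp
    show ?thesis
    proof (cases "m = n")
      case False
      hence "p \<ge> n" using True mp by simp
      hence "u a p \<ge> u a n" using le by simp
      moreover have "(a - 1) * (u a m - u a n) \<ge> 0" using a le True by simp
      ultimately show ?thesis using ineq apn' by (simp add: algebra_simps)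
    next
      case True
      have xx: "x = (a+1) * u a n" using x1 True by (simp add: algebra_simps)
      show ?thesis
      proof (cases "m' \<ge> Suc (Suc n)")
        case True
        hence "u a m' \<ge> u a (Suc (Suc n))" using le[of "Suc (Suc n)" m'] by (simp del: u.simps)
        then show ?thesis using big xx x2 apn' by simp
      next
        case False
        hence "m' = Suc n" using mm \<open>m = n\<close> by simp
        hence eq: "(a - 1) * u a (Suc j) + u a j = a * u a n'"
          using xx x2 n2 un by (simp add: algebra_simps)
        show ?thesis
        proof (cases "n' = Suc j")
          case True
          then show ?thesis using eq lt[of j "Suc j"] by (simp add: algebra_simps)
        next
          case False
          hence "n' \<le> j" using nn nj by simp
          hence "u a n' \<le> u a j" using le by simp
          hence "a * u a n' \<le> a * u a j" using a by simp
          moreover have "(a - 1) * (u a (Suc j) - u a j) > 0" using a lt[of j "Suc j"] by simp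
          ultimately show ?thesis using eq by (simp add: algebra_simps)
        qed
      qed
    qed
  next
    case False
    have um': "u a m' < (a+1) * u a n"
    proof -
      have "u a m < u a n" using False lt by simp
      then show ?thesis using x1 x2 apn' by (simp add: algebra_simps)
    qed
    have "\<not> m' \<ge> Suc (Suc n)"
    proof
      assume "Suc (Suc n) \<le> m'"
      hence "u a (Suc (Suc n)) \<le> u a m'" using le[of "Suc (Suc n)" m'] by (simp del: u.simps)
      thus False using big um' by linarith
    qed
    hence "m' \<le> Suc n" by simp
    show ?thesis
    proof (cases "m' = Suc n")
      case True
      have "u a m \<le> u a (Suc j)" using le False nj by simp
      then show ?thesis using True x1 x2 n2 apn' by simp
    next
      case mf: False
      hence "m' \<le> n" using \<open>m' \<le> Suc n\<close> by simp
      hence "u a m' \<le> u a n" using le by simp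
      moreover have "u a n' \<le> u a (Suc j)" using le nn nj by simp
      hence "a * u a n' \<le> a * u a (Suc j)" using a by simp
      ultimately have ineq: "u a m + (a - 1) * (a * u a (Suc j) + u a j) \<le> a * u a (Suc j)"
        using x1 x2 un by (simp add: algebra_simps)
      have t1: "a * (a - 2) * u a (Suc j) \<ge> 0" using a w by simp
      have t2: "(a - 1) * u a j \<ge> 0" using a w by simp
      have um: "u a m \<ge> 0" using nn0 by simp
      have ex: "u a m + (a - 1) * (a * u a (Suc j) + u a j) - a * u a (Suc j)
          = u a m + a * (a - 2) * u a (Suc j) + (a - 1) * u a j" by (simp add: algebra_simps)
      have z1: "u a m = 0" and z2: "a * (a - 2) * u a (Suc j) = 0" and z3: "(a - 1) * u a j = 0"
        using ineq t1 t2 um ex by linarith+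
      have a2: "a = 2" using z2 a w by simp
      have "u a j = 0" using z3 a by simp
      hence "j = 0" using lt[of 0 j] by (cases j) auto
      then show ?thesis using a2 z1 x1 nj by simp
    qed
  qed
qed

theorem theorem1p2:
  fixes a x :: int and m n m' n' :: nat
  assumes "a > 1"
    and "n \<ge> 1" and "n' \<ge> 1"
    and "(m, n) \<noteq> (m', n')"
    and "x = u a m + a * u a n"
    and "x = u a m' + a * u a n'"
  shows "a = 2 \<and> x = 4"
proof (cases "n = n'")
  case True
  hence "u a m = u a m'" using assms by simp
  hence "m = m'" using u_less_iff[OF assms(1)] by (metis linorder_neqE_nat order_less_irrefl)
  then show ?thesis using True assms(4) by simp
next
  case False
  then show ?thesis
  proof (cases "n < n'")
    case True
    then show ?thesis using main_lemma[OF assms(1) assms(2) True assms(6) assms(5)] by blast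
  next
    case False
    have lt2: "n' < n" using \<open>n \<noteq> n'\<close> False by simp
    show ?thesis using main_lemma[OF assms(1) assms(3) lt2 assms(5) assms(6)] by blast
  qed
qed

end
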